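(* There is an absolute constant $C>0$ such that for all $\varepsilon\in(0,1]$, $\gamma\in(0,1]$ and $n\ge C/(\gamma^2\varepsilon^2)$ there exists a symmetric private-coin $\varepsilon$-LDP protocol with $n$ users, each holding an i.i.d. sample from an unknown $p\in\Delta(\{0,1\}\times\{0,1\})$, whose curator outputs ``independent'' with probability at least $2/3$ if $p$ is a product distribution, and ``not independent'' with probability at least $2/3$ if $p$ is $\gamma$-far from every product distribution.
   Context: $d_{TV}(p,q)=\frac12\|p-q\|_1$. $p$ is a product distribution if $p(x_1,x_2)=p_1(x_1)p_2(x_2)$ for some distributions $p_1,p_2$ on $\{0,1\}$; $p$ is $\gamma$-far from product if $d_{TV}(p,q)>\gamma$ for every product $q$. Private-coin symmetric protocol: each user sends $Z_j\sim W(\cdot\mid X_j)$ for a single channel $W$ into a finite set, independently across users, and the curator outputs a possibly randomized function of $(Z_1,\dots,Z_n)$; $\varepsilon$-LDP means $W(z\mid x)\le e^\varepsilon W(z\mid x')$ for all $z,x,x'$. *)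

theory Defs
  imports "HOL-Probability.Probability"
begin

definition d_TV :: "'a pmf \<Rightarrow> 'a pmf \<Rightarrow> real" where
  "d_TV p q = (1/2) * (\<Sum>x\<in>set_pmf p \<union> set_pmf q. \<bar>pmf p x - pmf q x\<bar>)"

definition is_product :: "(bool \<times> bool) pmf \<Rightarrow> bool" where
  "is_product p \<longleftrightarrow> (\<exists>p1 p2 :: bool pmf. p = pair_pmf p1 p2)"

definition far_from_product :: "real \<Rightarrow> (bool \<times> bool) pmf \<Rightarrow> bool" where
  "far_from_product \<gamma> p \<longleftrightarrow> (\<forall>q. is_product q \<longrightarrow> d_TV p q > \<gamma>)"

definition finite_channel :: "('x \<Rightarrow> nat pmf) \<Rightarrow> bool" where
  "finite_channel W \<longleftrightarrow> finite (\<Union>x. set_pmf (W x))"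

definition is_LDP :: "real \<Rightarrow> ('x \<Rightarrow> nat pmf) \<Rightarrow> bool" where
  "is_LDP \<epsilon> W \<longleftrightarrow> (\<forall>z x x'. pmf (W x) z \<le> exp \<epsilon> * pmf (W x') z)"

text \<open>Symmetric private-coin protocol with n users: users j < n each hold an i.i.d. sample from p
  and independently send Z_j ~ W(.|X_j); the message vector (Z_0,...,Z_{n-1}) is a function on {..<n}
  (value 0 elsewhere); the curator A is a randomized function of it, True meaning "independent".\<close>

definition protocol_output :: "nat \<Rightarrow> ('x \<Rightarrow> nat pmf) \<Rightarrow> ((nat \<Rightarrow> nat) \<Rightarrow> bool pmf) \<Rightarrow> 'x pmf \<Rightarrow> bool pmf" where
  "protocol_output n W A p = bind_pmf (Pi_pmf {..<n} 0 (\<lambda>_. bind_pmf p W)) A"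

end

theory Submission
  imports Defs
begin


lemma hoeff:
  fixes D :: "nat pmf" and S :: "nat set" and n :: nat
  assumes n: "n > 0" and t: "t \<ge> 0"
  shows "measure_pmf.prob (Pi_pmf {..<n} 0 (\<lambda>_. D))
     {f. t \<le> \<bar>(\<Sum>i<n. indicator S (f i)) - real n * measure_pmf.prob D S\<bar>} \<le> 2 * exp (-2 * t^2 / real n)"
proof -
  define M where "M = Pi_pmf {..<n} (0::nat) (\<lambda>_. D)"
  have ind: "prob_space.indep_vars (measure_pmf M) (\<lambda>_. borel) (\<lambda>i f. indicator S (f i) :: real) {..<n}"
    unfolding M_def
    by (rule prob_space.indep_vars_compose2[OF measure_pmf.prob_space_axioms indep_vars_Pi_pmf]) auto
  interpret H: Hoeffding_ineq "measure_pmf M" "{..<n}" "\<lambda>i f. indicator S (f i) :: real" "\<lambda>_. 0" "\<lambda>_. 1"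
     "(\<Sum>i\<in>{..<n}. measure_pmf.expectation M (\<lambda>f. indicator S (f i) :: real))"
    by unfold_locales (auto simp: ind)
  have e: "measure_pmf.expectation M (\<lambda>f. indicator S (f i) :: real) = measure_pmf.prob D S" if "i < n" for i
  proof -
    have "measure_pmf.expectation M (\<lambda>f. indicator S (f i) :: real)
        = measure_pmf.expectation (map_pmf (\<lambda>f. f i) M) (indicator S)"
      by (subst integral_map_pmf) rule
    also have "map_pmf (\<lambda>f. f i) M = D" unfolding M_def using that by (subst Pi_pmf_component) auto
    finally show ?thesis by simp
  qed
  have "(\<Sum>i\<in>{..<n}. measure_pmf.expectation M (\<lambda>f. indicator S (f i) :: real)) = real n * measure_pmf.prob D S"
    using e by simp
  moreover have "(\<Sum>i\<in>{..<n}. (1 - 0 :: real)^2) > 0" using n by simp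
  ultimately show ?thesis using H.Hoeffding_ineq_abs_ge[OF t] unfolding M_def by simp
qed



definition code :: "bool \<times> bool \<Rightarrow> nat" where
  "code x = (if fst x then 2 else 0) + (if snd x then 1 else 0)"

definition Wc :: "real \<Rightarrow> bool \<times> bool \<Rightarrow> nat pmf" where
  "Wc e x = bind_pmf (bernoulli_pmf (1 - e/12)) (\<lambda>b. if b then pmf_of_set {..<4} else return_pmf (code x))"

lemma code_lt: "code x < 4" unfolding code_def by auto

lemma pmf_unif4: "pmf (pmf_of_set {..<4::nat}) z = (if z < 4 then 1/4 else 0)"
proof -
  have "{..<4::nat} \<noteq> {}" by (metis lessThan_empty_iff zero_neq_numeral)
  then show ?thesis by (simp add: pmf_of_set indicator_def)
qed

lemma sum4: "(\<Sum>x\<in>(UNIV::(bool\<times>bool) set). g x) = g (True,True) + g (True,False) + g (False,True) + g (False,False)"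
  proof -
  have u: "(UNIV::(bool\<times>bool) set) = {(True,True),(True,False),(False,True),(False,False)}" by auto
  show ?thesis by (simp only: u) (simp add: add.assoc)
qed

lemma pmf_sum1: "pmf p (True,True) + pmf p (True,False) + pmf p (False,True) + pmf p (False,False) = 1"
  using sum_pmf_eq_1[of UNIV p] by (simp add: sum4)

lemma pmf_Wc:
  assumes "0 \<le> e" "e \<le> 12"
  shows "pmf (Wc e x) z = (if z < 4 then (1 - e/12)/4 else 0) + (if z = code x then e/12 else 0)"
  using assms unfolding Wc_def pmf_bind
  by (subst integral_bernoulli_pmf) (auto simp: pmf_unif4 code_lt)

lemma pmf_bind_Wc:
  assumes "0 \<le> e" "e \<le> 12"
  shows "pmf (bind_pmf p (Wc e)) z = (if z < 4 then (1 - e/12)/4 else 0)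
     + e/12 * (\<Sum>x\<in>UNIV. (if code x = z then pmf p x else 0))"
proof -
  have "pmf (bind_pmf p (Wc e)) z = (\<Sum>x\<in>UNIV. pmf (Wc e x) z * pmf p x)"
    unfolding pmf_bind by (rule integral_measure_pmf_real) auto
  also have "\<dots> = (\<Sum>x\<in>UNIV. (if z < 4 then (1 - e/12)/4 else 0) * pmf p x
          + e/12 * (if code x = z then pmf p x else 0))"
    using assms by (intro sum.cong) (auto simp: pmf_Wc algebra_simps)
  also have "\<dots> = (if z < 4 then (1 - e/12)/4 else 0) * (\<Sum>x\<in>UNIV. pmf p x)
          + e/12 * (\<Sum>x\<in>UNIV. (if code x = z then pmf p x else 0))"
    by (simp add: sum.distrib sum_distrib_left)
  also have "(\<Sum>x\<in>UNIV. pmf p x) = 1" by (rule sum_pmf_eq_1) auto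
  finally show ?thesis by simp
qed

lemma E1: assumes "0 \<le> e" "e \<le> 12"
  shows "measure_pmf.prob (bind_pmf p (Wc e)) {3} = (1 - e/12)/4 + e/12 * pmf p (True,True)"
  using assms by (simp add: measure_measure_pmf_finite pmf_bind_Wc sum4 code_def)

lemma E2: assumes "0 \<le> e" "e \<le> 12"
  shows "measure_pmf.prob (bind_pmf p (Wc e)) {2,3} = 2*((1 - e/12)/4) + e/12 * (pmf p (True,True) + pmf p (True,False))"
  using assms by (simp add: measure_measure_pmf_finite pmf_bind_Wc sum4 code_def field_simps)

lemma E3: assumes "0 \<le> e" "e \<le> 12"
  shows "measure_pmf.prob (bind_pmf p (Wc e)) {1,3} = 2*((1 - e/12)/4) + e/12 * (pmf p (True,True) + pmf p (False,True))"
  using assms by (simp add: measure_measure_pmf_finite pmf_bind_Wc sum4 code_def field_simps)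

lemma Wc_finite: "0 \<le> e \<Longrightarrow> e \<le> 12 \<Longrightarrow> finite_channel (Wc e)"
  unfolding finite_channel_def
  by (rule finite_subset[of _ "{..<4}"]) (auto simp: set_pmf_iff pmf_Wc code_lt split: if_splits)

lemma Wc_LDP: assumes "0 < e" "e \<le> 1" shows "is_LDP e (Wc e)"
  unfolding is_LDP_def
proof (intro allI)
  fix z x x'
  have ex: "1 + e \<le> exp e" by (rule exp_ge_add_one_self)
  have r: "(1 - e/12)/4 + e/12 \<le> (1 + e) * ((1 - e/12)/4)"
    using assms by (simp add: field_simps)
  show "pmf (Wc e x) z \<le> exp e * pmf (Wc e x') z"
  proof (cases "z < 4")
    case True
    have "pmf (Wc e x) z \<le> (1 - e/12)/4 + e/12" using assms by (simp add: pmf_Wc)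
    also have "\<dots> \<le> (1 + e) * ((1 - e/12)/4)" by (rule r)
    also have "\<dots> \<le> exp e * ((1 - e/12)/4)" using ex assms by (intro mult_right_mono) auto
    also have "\<dots> \<le> exp e * pmf (Wc e x') z" using assms True by (intro mult_left_mono) (auto simp: pmf_Wc)
    finally show ?thesis .
  next
    case False
    then show ?thesis using assms code_lt[of x] by (auto simp: pmf_Wc)
  qed
qed



definition delta :: "(bool \<times> bool) pmf \<Rightarrow> real" where
  "delta p = pmf p (True,True) - (pmf p (True,True) + pmf p (True,False)) * (pmf p (True,True) + pmf p (False,True))"

lemma bool_sum1: "pmf (p1::bool pmf) True + pmf p1 False = 1"
  using sum_pmf_eq_1[of UNIV p1] by (auto simp: UNIV_bool add.commute)

lemma prod_delta: assumes "is_product p" shows "delta p = 0"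
proof -
  obtain p1 p2 where p: "p = pair_pmf p1 p2" using assms unfolding is_product_def by auto
  have "delta p = pmf p1 True * pmf p2 True * (1 - (pmf p1 True + pmf p1 False) * (pmf p2 True + pmf p2 False))"
    unfolding delta_def p pmf_pair by (simp add: algebra_simps)
  then show ?thesis by (simp add: bool_sum1)
qed

lemma pmf_fst: "pmf (map_pmf fst p) a = pmf p (a,True) + pmf p (a,False)"
proof -
  have "fst -` {a} = {(a,True),(a,False)}" by auto
  then show ?thesis by (simp add: pmf_map measure_measure_pmf_finite)
qed

lemma pmf_snd: "pmf (map_pmf snd p) a = pmf p (True,a) + pmf p (False,a)"
proof -
  have "snd -` {a} = {(True,a),(False,a)}" by auto
  then show ?thesis by (simp add: pmf_map measure_measure_pmf_finite)
qed

lemma far_delta: assumes "far_from_product g p" shows "g < 2 * \<bar>delta p\<bar>"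
proof -
  define q where "q = pair_pmf (map_pmf fst p) (map_pmf snd p)"
  have "is_product q" unfolding q_def is_product_def by auto
  then have g: "g < d_TV p q" using assms unfolding far_from_product_def by auto
  have "d_TV p q = (1/2) * (\<Sum>x\<in>UNIV. \<bar>pmf p x - pmf q x\<bar>)"
    unfolding d_TV_def
    by (rule arg_cong[where f="\<lambda>s. (1/2) * s"], rule sum.mono_neutral_left) (auto simp: set_pmf_iff)
  also have "\<dots> = 2 * \<bar>delta p\<bar>"
  proof -
    have s: "pmf p (False,False) = 1 - pmf p (True,True) - pmf p (True,False) - pmf p (False,True)"
      using pmf_sum1[of p] by simp
    show ?thesis
      unfolding sum4 q_def pmf_pair pmf_fst pmf_snd delta_def s
      by (simp add: algebra_simps abs_minus_commute)
  qed
  finally show ?thesis using g by simp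
qed



lemma comb:
  fixes F G H x y z e :: real
  assumes "\<bar>F - x\<bar> < e" "\<bar>G - y\<bar> < e" "\<bar>H - z\<bar> < e" "0 \<le> y" "y \<le> 1" "0 \<le> z" "z \<le> 1" "e \<le> 1"
  shows "\<bar>(F - G*H) - (x - y*z)\<bar> < 4*e"
proof -
  have H: "\<bar>H\<bar> \<le> 2" using assms by linarith
  have "G*H - y*z = (G-y)*H + y*(H-z)" by (simp add: algebra_simps)
  then have "\<bar>G*H - y*z\<bar> \<le> \<bar>G-y\<bar>*\<bar>H\<bar> + \<bar>y\<bar>*\<bar>H-z\<bar>" by (simp add: abs_mult abs_triangle_ineq[THEN order_trans])
  also have "\<dots> \<le> e * 2 + 1 * e"
    using assms H by (intro add_mono mult_mono) auto
  finally show ?thesis using assms by linarith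
qed

lemma exp18: "2 * exp (-2 * x) \<le> (1/9::real)" if "x \<ge> 9" for x :: real
proof -
  have "exp (-2*x) \<le> exp (-18::real)" using that by simp
  also have "exp (-18::real) = 1 / exp 18" by (simp add: exp_minus divide_inverse)
  also have "1 / exp (18::real) \<le> 1/19" using exp_ge_add_one_self[of 18] by (intro divide_left_mono) auto
  finally show ?thesis by simp
qed

lemma core:
  fixes e g :: real and n :: nat and p :: "(bool \<times> bool) pmf"
  assumes e: "0 < e" "e \<le> 1" and g: "0 < g" "g \<le> 1" and nb: "real n * (e/12)^2 * (g/20)^2 \<ge> 9"
  defines "r \<equiv> e/12" and "\<beta> \<equiv> (1 - e/12)/4" and "\<eta> \<equiv> g/20"
  defines "u \<equiv> \<lambda>S (f::nat\<Rightarrow>nat). (\<Sum>i<n. indicator S (f i) :: real)"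
  defines "Est \<equiv> \<lambda>f. (u {3} f / n - \<beta>)/r - ((u {2,3} f / n - 2*\<beta>)/r) * ((u {1,3} f / n - 2*\<beta>)/r)"
  defines "M \<equiv> Pi_pmf {..<n} 0 (\<lambda>_. bind_pmf p (Wc e))"
  shows "\<exists>Bad. measure_pmf.prob M Bad \<le> 1/3 \<and> (\<forall>f. f \<notin> Bad \<longrightarrow> \<bar>Est f - delta p\<bar> < g/5)"
proof -
  define D where "D = bind_pmf p (Wc e)"
  define t where "t = real n * r * \<eta>"
  have n: "n > 0" using nb by (cases n) auto
  have r: "r > 0" using e by (simp add: r_def)
  have t: "t \<ge> 0" using r g by (simp add: t_def \<eta>_def)
  define B where "B = (\<lambda>S. {f. t \<le> \<bar>u S f - real n * measure_pmf.prob D S\<bar>})"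
  have hb: "measure_pmf.prob M (B S) \<le> 1/9" for S
  proof -
    have "measure_pmf.prob M (B S) \<le> 2 * exp (-2 * t^2 / real n)"
      unfolding B_def M_def u_def D_def by (rule hoeff[OF n t])
    also have "-2 * t^2 / real n = -2 * (real n * r^2 * \<eta>^2)"
      using n by (simp add: t_def power2_eq_square)
    also have "2 * exp \<dots> \<le> 1/9"
      by (rule exp18) (use nb in \<open>simp add: r_def \<eta>_def\<close>)
    finally show ?thesis .
  qed
  define Bad where "Bad = B {3} \<union> B {2,3} \<union> B {1,3}"
  have "measure_pmf.prob M Bad \<le> measure_pmf.prob M (B {3}) + measure_pmf.prob M (B {2,3}) + measure_pmf.prob M (B {1,3})"
    unfolding Bad_def
    by (rule order_trans[OF measure_Un_le add_right_mono[OF measure_Un_le]]) auto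
  also have "\<dots> \<le> 1/3" using hb[of "{3}"] hb[of "{2,3}"] hb[of "{1,3}"] by simp
  finally have P: "measure_pmf.prob M Bad \<le> 1/3" .
  have e12: "0 \<le> e" "e \<le> 12" using e by auto
  have dev: "\<bar>(u S f / n - c*\<beta>)/r - q\<bar> < \<eta>"
    if "f \<notin> B S" "measure_pmf.prob D S = c*\<beta> + r*q" for S f c q
  proof -
    have "\<bar>u S f - real n * (c*\<beta> + r*q)\<bar> < t" using that unfolding B_def by auto
    then have "\<bar>u S f / n - (c*\<beta> + r*q)\<bar> < r * \<eta>"
      using n unfolding t_def by (simp add: field_simps abs_divide[symmetric] flip: abs_mult)
    then have "\<bar>(u S f / n - c*\<beta>) - r*q\<bar> < r * \<eta>" by (simp add: algebra_simps)
    moreover have "r * ((u S f / n - c*\<beta>)/r - q) = (u S f / n - c*\<beta>) - r*q" using r by (simp add: field_simps)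
    ultimately have "\<bar>r * ((u S f / n - c*\<beta>)/r - q)\<bar> < r * \<eta>" by simp
    then show ?thesis using r by (simp add: abs_mult)
  qed
  have ps: "pmf p (True,True) + pmf p (True,False) \<le> 1" "pmf p (True,True) + pmf p (False,True) \<le> 1"
    using pmf_sum1[of p] pmf_nonneg[of p] by (smt (verit))+
  have good: "\<bar>Est f - delta p\<bar> < g/5" if "f \<notin> Bad" for f
  proof -
    have 1: "\<bar>(u {3} f / n - 1*\<beta>)/r - pmf p (True,True)\<bar> < \<eta>"
      by (rule dev) (use that in \<open>simp add: Bad_def\<close>, unfold D_def E1[OF e12], simp add: \<beta>_def r_def)
    have 2: "\<bar>(u {2,3} f / n - 2*\<beta>)/r - (pmf p (True,True) + pmf p (True,False))\<bar> < \<eta>"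
      by (rule dev) (use that in \<open>simp add: Bad_def\<close>, unfold D_def E2[OF e12], simp add: \<beta>_def r_def)
    have 3: "\<bar>(u {1,3} f / n - 2*\<beta>)/r - (pmf p (True,True) + pmf p (False,True))\<bar> < \<eta>"
      by (rule dev) (use that in \<open>simp add: Bad_def\<close>, unfold D_def E3[OF e12], simp add: \<beta>_def r_def)
    have "\<bar>Est f - delta p\<bar> < 4*\<eta>"
      unfolding Est_def delta_def
      using comb[OF 1[simplified] 2 3] ps g by (simp add: \<eta>_def add_nonneg_nonneg)
    then show ?thesis by (simp add: \<eta>_def)
  qed
  show ?thesis using P good by blast
qed



theorem corollary2p8:
  shows "\<exists>C>0. \<forall>(\<epsilon>::real) (\<gamma>::real) (n::nat).
           0 < \<epsilon> \<and> \<epsilon> \<le> 1 \<and> 0 < \<gamma> \<and> \<gamma> \<le> 1 \<and> real n \<ge> C / (\<gamma>^2 * \<epsilon>^2) \<longrightarrow>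
           (\<exists>(W :: bool \<times> bool \<Rightarrow> nat pmf) (A :: (nat \<Rightarrow> nat) \<Rightarrow> bool pmf).
              finite_channel W \<and> is_LDP \<epsilon> W \<and>
              (\<forall>p. is_product p \<longrightarrow> pmf (protocol_output n W A p) True \<ge> 2/3) \<and>
              (\<forall>p. far_from_product \<gamma> p \<longrightarrow> pmf (protocol_output n W A p) False \<ge> 2/3))"
proof (intro exI[of _ "518400::real"] conjI allI impI)
  fix e g :: real and n :: nat
  assume H: "0 < e \<and> e \<le> 1 \<and> 0 < g \<and> g \<le> 1 \<and> real n \<ge> 518400 / (g^2 * e^2)"
  then have e: "0 < e" "e \<le> 1" and g: "0 < g" "g \<le> 1" and nC: "real n \<ge> 518400 / (g^2 * e^2)" by auto
  have pos: "g^2 * e^2 > 0" using e g by simp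
  have "518400 \<le> real n * (g^2 * e^2)" using nC pos by (simp add: pos_divide_le_eq)
  then have nb: "real n * (e/12)^2 * (g/20)^2 \<ge> 9" by (simp add: power_divide field_simps)
  define r where "r = e/12"
  define \<beta> where "\<beta> = (1 - e/12)/4"
  define u where "u = (\<lambda>S (f::nat\<Rightarrow>nat). (\<Sum>i<n. indicator S (f i) :: real))"
  define Est where "Est = (\<lambda>f. (u {3} f / n - \<beta>)/r - ((u {2,3} f / n - 2*\<beta>)/r) * ((u {1,3} f / n - 2*\<beta>)/r))"
  define dec where "dec = (\<lambda>f. \<bar>Est f\<bar> < g/4)"
  define A where "A = (\<lambda>f. return_pmf (dec f))"
  have out: "pmf (protocol_output n (Wc e) A p) b = measure_pmf.prob (Pi_pmf {..<n} 0 (\<lambda>_. bind_pmf p (Wc e))) {f. dec f = b}" for p b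
  proof -
    have "protocol_output n (Wc e) A p = map_pmf dec (Pi_pmf {..<n} 0 (\<lambda>_. bind_pmf p (Wc e)))"
      unfolding protocol_output_def A_def map_pmf_def ..
    then show ?thesis by (simp add: pmf_map vimage_def)
  qed
  have main: "pmf (protocol_output n (Wc e) A p) b \<ge> 2/3"
    if "\<And>f. \<bar>Est f - delta p\<bar> < g/5 \<Longrightarrow> dec f = b" for p b
  proof -
    define M where "M = Pi_pmf {..<n} 0 (\<lambda>_. bind_pmf p (Wc e))"
    obtain Bad where B1: "measure_pmf.prob M Bad \<le> 1/3" and B2: "\<forall>f. f \<notin> Bad \<longrightarrow> \<bar>Est f - delta p\<bar> < g/5"
      using core[OF e g nb, of p] unfolding M_def Est_def u_def r_def \<beta>_def by blast
    have "measure_pmf.prob M (UNIV - Bad) \<le> measure_pmf.prob M {f. dec f = b}"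
      using B2 that by (intro measure_pmf.finite_measure_mono) auto
    moreover have "measure_pmf.prob M (UNIV - Bad) = 1 - measure_pmf.prob M Bad"
      using measure_pmf.prob_compl[of Bad M] by simp
    ultimately show ?thesis using B1 out[of p b] unfolding M_def by simp
  qed
  show "\<exists>W A. finite_channel W \<and> is_LDP e W \<and>
              (\<forall>p. is_product p \<longrightarrow> pmf (protocol_output n W A p) True \<ge> 2/3) \<and>
              (\<forall>p. far_from_product g p \<longrightarrow> pmf (protocol_output n W A p) False \<ge> 2/3)"
  proof (intro exI[of _ "Wc e"] exI[of _ A] conjI allI impI)
    show "finite_channel (Wc e)" using e by (intro Wc_finite) auto
    show "is_LDP e (Wc e)" using e by (rule Wc_LDP)
  next
    fix p assume "is_product p"
    then have d: "delta p = 0" by (rule prod_delta)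
    show "pmf (protocol_output n (Wc e) A p) True \<ge> 2/3"
      by (rule main) (use d g in \<open>auto simp: dec_def\<close>)
  next
    fix p assume "far_from_product g p"
    then have d: "g < 2 * \<bar>delta p\<bar>" by (rule far_delta)
    show "pmf (protocol_output n (Wc e) A p) False \<ge> 2/3"
      by (rule main) (use d g in \<open>auto simp: dec_def abs_if split: if_splits\<close>)
  qed
qed simp


end
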